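(* Let $(\Omega,\mathcal F,P)$ be a probability space and $T:\Omega\to\Omega$ a measurable transformation preserving $P$ such that $(\Omega,\mathcal F,P,T)$ is ergodic. Let $b:\Omega\to\mathbb R$ and $r:\Omega\to(0,\infty)$ be random variables, and for $\omega\in\Omega$ let $\varphi_\omega(y)=b(\omega)+r(\omega)y$, $y\in\mathbb R$. Assume that the set $S=\{\varphi_\omega:\omega\in\Omega\}$ of affine maps is countable, with $P(\varphi_\omega=\varphi)>0$ for every $\varphi\in S$, that $b\in L^1(P)$, $\log r\in L^1(P)$ and $\int_\Omega\log r\,dP<0$. Set $r_0(\omega)=1$, $r_n(\omega)=r(\omega)r(T\omega)\cdots r(T^{n-1}\omega)$ for $n\ge1$, and define the (almost everywhere defined) random variable $$X(\omega)=\sum_{n\ge0}r_n(\omega)\,b(T^n\omega).$$ Let $P_X$ be the law of $X$ on $(\mathbb R,\mathcal B(\mathbb R))$, i.e. $P_X(A)=P(X^{-1}(A))$. Then $P_X$ is of pure type: it is either purely atomic, or absolutely continuous with respect to Lebesgue measure, or continuous and singular with respect to Lebesgue measure.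
   Context: Lebesgue measure on $\mathbb R$ is denoted $Leb$. *)

theory Defs
  imports "HOL-Probability.Probability"
begin

definition measure_preserving_map :: "'a measure \<Rightarrow> ('a \<Rightarrow> 'a) \<Rightarrow> bool" where
  "measure_preserving_map M T \<longleftrightarrow> T \<in> measurable M M \<and> distr M M T = M"

definition ergodic :: "'a measure \<Rightarrow> ('a \<Rightarrow> 'a) \<Rightarrow> bool" where
  "ergodic M T \<longleftrightarrow> measure_preserving_map M T \<and>
     (\<forall>A \<in> sets M. T -` A \<inter> space M = A \<longrightarrow>
        measure M A = 0 \<or> measure M A = 1)"

definition rprod :: "('a \<Rightarrow> 'a) \<Rightarrow> ('a \<Rightarrow> real) \<Rightarrow> nat \<Rightarrow> 'a \<Rightarrow> real" where
  "rprod T r n w = (\<Prod>i<n. r ((T ^^ i) w))"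

text \<open>X(w) = sum_n r_n(w) b(T^n w); set to 0 where the series does not converge
  (a null set under the hypotheses).\<close>
definition Xrv :: "('a \<Rightarrow> 'a) \<Rightarrow> ('a \<Rightarrow> real) \<Rightarrow> ('a \<Rightarrow> real) \<Rightarrow> 'a \<Rightarrow> real" where
  "Xrv T b r w = (if summable (\<lambda>n. rprod T r n w * b ((T ^^ n) w))
                  then (\<Sum>n. rprod T r n w * b ((T ^^ n) w)) else 0)"

definition purely_atomic :: "real measure \<Rightarrow> bool" where
  "purely_atomic \<mu> \<longleftrightarrow> (\<exists>C. countable C \<and> emeasure \<mu> (UNIV - C) = 0)"

definition continuous_measure :: "real measure \<Rightarrow> bool" where
  "continuous_measure \<mu> \<longleftrightarrow> (\<forall>x. emeasure \<mu> {x} = 0)"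

definition singular_lebesgue :: "real measure \<Rightarrow> bool" where
  "singular_lebesgue \<mu> \<longleftrightarrow>
     (\<exists>A \<in> sets borel. emeasure lborel A = 0 \<and> emeasure \<mu> (UNIV - A) = 0)"

end

theory Submission
  imports Defs
begin

lemma funpow_meas[measurable]: "T \<in> measurable M M \<Longrightarrow> (T ^^ n) \<in> measurable M M"
  by (induction n) auto


lemma shift:
  assumes "r w \<noteq> 0"
  shows "summable (\<lambda>n. rprod T r n w * b ((T ^^ n) w)) \<longleftrightarrow> summable (\<lambda>n. rprod T r n (T w) * b ((T ^^ n) (T w)))"
    and "summable (\<lambda>n. rprod T r n (T w) * b ((T ^^ n) (T w))) \<Longrightarrow> Xrv T b r w = b w + r w * Xrv T b r (T w)"
proof -
  define f where "f n = rprod T r n w * b ((T ^^ n) w)" for n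
  define g where "g n = rprod T r n (T w) * b ((T ^^ n) (T w))" for n
  have fs: "f (Suc n) = r w * g n" for n
    unfolding f_def g_def rprod_def
    by (subst prod.lessThan_Suc_shift) (simp add: funpow_Suc_right del: funpow.simps prod.lessThan_Suc)
  have f0: "f 0 = b w" unfolding f_def rprod_def by simp
  have "summable f \<longleftrightarrow> summable g"
    using summable_Suc_iff[of f] fs assms by simp
  then show "summable (\<lambda>n. rprod T r n w * b ((T ^^ n) w)) \<longleftrightarrow> summable (\<lambda>n. rprod T r n (T w) * b ((T ^^ n) (T w)))"
    unfolding f_def g_def .
  assume g: "summable (\<lambda>n. rprod T r n (T w) * b ((T ^^ n) (T w)))"
  then have gs: "summable g" unfolding g_def .
  then have fsm: "summable f" using \<open>summable f \<longleftrightarrow> summable g\<close> by simp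
  have "suminf f = f 0 + (\<Sum>n. f (Suc n))" using suminf_split_head[OF fsm] by simp
  also have "(\<Sum>n. f (Suc n)) = r w * suminf g" unfolding fs using suminf_mult[OF gs] by simp
  finally have "suminf f = b w + r w * suminf g" using f0 by simp
  then show "Xrv T b r w = b w + r w * Xrv T b r (T w)"
    using fsm gs unfolding Xrv_def f_def[abs_def] g_def[abs_def] by simp
qed

lemma Xrv_step:
  assumes "r w \<noteq> 0" "Xrv T b r w \<in> B"
    "\<And>y. y \<in> B \<Longrightarrow> (y - b w) / r w \<in> B" "0 \<in> B \<Longrightarrow> True"
  shows "Xrv T b r (T w) \<in> B"
proof (cases "summable (\<lambda>n. rprod T r n (T w) * b ((T ^^ n) (T w)))")
  case True
  from shift(2)[of r w T b, OF assms(1) True] have "Xrv T b r (T w) = (Xrv T b r w - b w) / r w"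
    using assms(1) by (simp add: field_simps)
  then show ?thesis using assms(2,3) by simp
next
  case False
  then have "\<not> summable (\<lambda>n. rprod T r n w * b ((T ^^ n) w))" using shift(1)[of r w T b, OF assms(1)] by simp
  then show ?thesis using False assms(2) unfolding Xrv_def by simp
qed

lemma core:
  assumes P: "prob_space M" and T[measurable]: "T \<in> measurable M M" and D: "distr M M T = M"
    and erg: "\<forall>A\<in>sets M. T -` A \<inter> space M = A \<longrightarrow> measure M A = 0 \<or> measure M A = 1"
    and E[measurable]: "E \<in> sets M" and inv: "\<And>w. w \<in> E \<Longrightarrow> T w \<in> E"
  shows "measure M E = 0 \<or> measure M E = 1"
proof -
  have Esp: "E \<subseteq> space M" using sets.sets_into_space[OF E] .
  define A where "A n = (T ^^ n) -` E \<inter> space M" for n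
  have Ameas: "A n \<in> sets M" for n unfolding A_def
    using measurable_sets[OF funpow_meas[OF T] E] by simp
  have TA: "T -` A n \<inter> space M = A (Suc n)" for n
    unfolding A_def using measurable_space[OF T]
    by (auto simp: funpow_Suc_right simp del: funpow.simps)
  have emA: "emeasure M (A n) = emeasure M E" for n
  proof (induction n)
    case 0 show ?case unfolding A_def using Esp by (simp add: Int_absorb2)
  next
    case (Suc n)
    have "emeasure M (A (Suc n)) = emeasure (distr M M T) (A n)"
      using emeasure_distr[OF T Ameas[of n]] TA by simp
    then show ?case using D Suc by simp
  qed
  have inc: "incseq A"
    unfolding incseq_Suc_iff A_def using inv by auto
  define F where "F = (\<Union>n. A n)"
  have Fm: "F \<in> sets M" unfolding F_def using Ameas by auto
  have "emeasure M F = (SUP n. emeasure M (A n))"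
    unfolding F_def using SUP_emeasure_incseq[OF _ inc, of M] Ameas by (metis image_subset_iff)
  then have "emeasure M F = emeasure M E" using emA by simp
  then have mF: "measure M F = measure M E" unfolding measure_def by simp
  have "T -` F \<inter> space M = (\<Union>n. A (Suc n))" unfolding F_def using TA by auto
  also have "\<dots> = F" unfolding F_def
  proof
    show "(\<Union>n. A (Suc n)) \<subseteq> (\<Union>n. A n)" by auto
    show "(\<Union>n. A n) \<subseteq> (\<Union>n. A (Suc n))"
    proof
      fix x assume "x \<in> (\<Union>n. A n)"
      then obtain n where "x \<in> A n" by auto
      then have "x \<in> A (Suc n)" using inc unfolding incseq_Suc_iff by auto
      then show "x \<in> (\<Union>n. A (Suc n))" by auto
    qed
  qed
  finally show ?thesis using erg Fm mF by metis
qed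

lemma Xrv_meas:
  assumes T[measurable]: "T \<in> measurable M M" and [measurable]: "b \<in> borel_measurable M" "r \<in> borel_measurable M"
  shows "Xrv T b r \<in> borel_measurable M"
proof -
  have rp[measurable]: "(\<lambda>w. rprod T r n w) \<in> borel_measurable M" for n
    unfolding rprod_def by measurable
  have f[measurable]: "(\<lambda>w. rprod T r n w * b ((T ^^ n) w)) \<in> borel_measurable M" for n
    by measurable
  have "Measurable.pred M (\<lambda>w. Cauchy (\<lambda>n. \<Sum>i<n. rprod T r i w * b ((T ^^ i) w)))"
    unfolding pred_def using sets_Collect_Cauchy[of "\<lambda>n w. \<Sum>i<n. rprod T r i w * b ((T ^^ i) w)" M]
    by auto
  then have [measurable]: "Measurable.pred M (\<lambda>w. summable (\<lambda>n. rprod T r n w * b ((T ^^ n) w)))"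
    by (simp add: summable_iff_convergent Cauchy_convergent_iff)
  show ?thesis unfolding Xrv_def[abs_def] by measurable
qed



fun fw :: "(real \<times> real) list \<Rightarrow> real \<Rightarrow> real" where
  "fw [] y = y"
| "fw (p # ps) y = fw ps (fst p + snd p * y)"

lemma fw_affine: "\<forall>p\<in>set ps. snd p > 0 \<Longrightarrow> \<exists>\<alpha> \<beta>. \<beta> > 0 \<and> (\<forall>y. fw ps y = \<alpha> + \<beta> * y)"
proof (induction ps)
  case Nil then show ?case by (intro exI[of _ 0] exI[of _ 1]) simp
next
  case (Cons p ps)
  then obtain \<alpha> \<beta> where ab: "\<beta> > 0" "\<And>y. fw ps y = \<alpha> + \<beta> * y" by auto
  show ?case using ab Cons.prems
    by (intro exI[of _ "\<alpha> + \<beta> * fst p"] exI[of _ "\<beta> * snd p"]) (simp add: algebra_simps)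
qed

definition cl :: "(real \<times> real) set \<Rightarrow> real set \<Rightarrow> real set" where
  "cl S B = (\<Union>ps\<in>lists S. fw ps -` B)"

lemma cl_sub: "B \<subseteq> cl S B"
  unfolding cl_def by (auto intro!: bexI[of _ "[]"])

lemma cl_closed: assumes p: "p \<in> S" "snd p > 0" and y: "y \<in> cl S B" shows "(y - fst p) / snd p \<in> cl S B"
  unfolding cl_def
proof -
  from y obtain ps where ps: "ps \<in> lists S" "fw ps y \<in> B" by (auto simp: cl_def)
  have "fw (p # ps) ((y - fst p) / snd p) = fw ps y" using p by simp
  then show "(y - fst p) / snd p \<in> (\<Union>ps\<in>lists S. fw ps -` B)"
    using ps p by (intro UN_I[of "p # ps"]) auto
qed

lemma fw_meas: "\<forall>p\<in>S. snd p > 0 \<Longrightarrow> ps \<in> lists S \<Longrightarrow> fw ps \<in> borel_measurable borel"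
proof -
  assume "\<forall>p\<in>S. snd p > 0" "ps \<in> lists S"
  then obtain \<alpha> \<beta> where "\<forall>y. fw ps y = \<alpha> + \<beta> * y" using fw_affine[of ps] by auto
  then have "fw ps = (\<lambda>y. \<alpha> + \<beta> * y)" by auto
  moreover have "(\<lambda>y. \<alpha> + \<beta> * y) \<in> borel_measurable borel" by measurable
  ultimately show ?thesis by simp
qed

lemma cl_borel: assumes "countable S" "\<forall>p\<in>S. snd p > 0" "B \<in> sets borel" shows "cl S B \<in> sets borel"
proof -
  have "fw ps -` B \<in> sets borel" if "ps \<in> lists S" for ps
    using measurable_sets[OF fw_meas[OF assms(2) that] assms(3)] by simp
  then show ?thesis unfolding cl_def
    by (intro sets.countable_UN'[OF countable_lists[OF assms(1)]]) (simp add: image_subset_iff)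
qed

lemma affine_null:
  fixes \<alpha> \<beta> :: real
  assumes "\<beta> > 0" "N \<in> null_sets lborel"
  shows "(\<lambda>y. \<alpha> + \<beta> * y) -` N \<in> null_sets lborel"
proof -
  have Nb: "N \<in> sets borel" using assms(2) by (simp add: null_sets_def)
  have m: "(\<lambda>y. \<alpha> + \<beta> * y) -` N \<in> sets borel"
  proof -
    have "(\<lambda>y. \<alpha> + \<beta> * y) \<in> borel_measurable borel"
      by measurable
    then show ?thesis using measurable_sets_borel Nb by blast
  qed
  have "emeasure lborel N = emeasure (density (distr lborel borel (\<lambda>x. \<alpha> + \<beta> * x)) (\<lambda>_. ennreal \<bar>\<beta>\<bar>)) N"
  proof -
    have eq: "lborel = density (distr lborel borel (\<lambda>x. \<alpha> + \<beta> * x)) (\<lambda>_. ennreal \<bar>\<beta>\<bar>)"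
      using lborel_real_affine[of \<beta> \<alpha>] assms(1) by blast
    show ?thesis using arg_cong[OF eq, of "\<lambda>M. emeasure M N"] by (simp only:)
  qed
  also have "\<dots> = ennreal \<beta> * emeasure lborel ((\<lambda>y. \<alpha> + \<beta> * y) -` N)"
    using Nb assms(1) by (simp add: emeasure_density nn_integral_cmult_indicator emeasure_distr)
  finally have "ennreal \<beta> * emeasure lborel ((\<lambda>y. \<alpha> + \<beta> * y) -` N) = 0"
    using assms(2) by (simp add: null_sets_def)
  then have "emeasure lborel ((\<lambda>y. \<alpha> + \<beta> * y) -` N) = 0"
    using assms(1) by (metis ennreal_eq_0_iff mult_eq_0_iff not_le)
  then show ?thesis using m by (intro null_setsI) simp_all
qed

lemma cl_null: assumes "countable S" "\<forall>p\<in>S. snd p > 0" "N \<in> null_sets lborel" shows "cl S N \<in> null_sets lborel"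
  unfolding cl_def
proof (intro null_sets_UN')
  fix ps assume "ps \<in> lists S"
  then have "\<forall>p\<in>set ps. snd p > 0" using assms(2) by auto
  then obtain \<alpha> \<beta> where "\<beta> > 0" "\<forall>y. fw ps y = \<alpha> + \<beta> * y" using fw_affine[of ps] by blast
  then have "fw ps = (\<lambda>y. \<alpha> + \<beta> * y)" by auto
  then show "fw ps -` N \<in> null_sets lborel" using affine_null[OF \<open>\<beta> > 0\<close> assms(3), of \<alpha>] by metis
qed (use assms in simp_all)

lemma cl_countable: assumes "countable S" "\<forall>p\<in>S. snd p > 0" shows "countable (cl S {x0})"
  unfolding cl_def
proof (rule countable_UN)
  fix ps assume "ps \<in> lists S"
  then have "\<forall>p\<in>set ps. snd p > 0" using assms(2) by auto
  then obtain \<alpha> \<beta> where "\<beta> > 0" "\<forall>y. fw ps y = \<alpha> + \<beta> * y" using fw_affine[of ps] by blast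
  then have "fw ps -` {x0} \<subseteq> {(x0 - \<alpha>) / \<beta>}"
  proof (intro subsetI)
    fix y assume "y \<in> fw ps -` {x0}"
    then have "\<alpha> + \<beta> * y = x0" using \<open>\<forall>y. fw ps y = \<alpha> + \<beta> * y\<close> by simp
    then have "y = (x0 - \<alpha>) / \<beta>" using \<open>\<beta> > 0\<close> by (metis add_diff_cancel_left' less_irrefl nonzero_mult_div_cancel_left)
    then show "y \<in> {(x0 - \<alpha>) / \<beta>}" by simp
  qed
  then show "countable (fw ps -` {x0})" by (rule countable_subset) simp
qed (use assms in simp_all)




theorem mainTheorem1:
  fixes M :: "'a measure" and T :: "'a \<Rightarrow> 'a" and b r :: "'a \<Rightarrow> real"
  assumes "prob_space M"
    and "measure_preserving_map M T"
    and "ergodic M T"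
    and "b \<in> borel_measurable M" and "r \<in> borel_measurable M"
    and "\<And>w. w \<in> space M \<Longrightarrow> r w > 0"
    and "countable ((\<lambda>w. (b w, r w)) ` space M)"
    and "\<And>w. w \<in> space M \<Longrightarrow>
           measure M {v \<in> space M. b v = b w \<and> r v = r w} > 0"
    and "integrable M b"
    and "integrable M (\<lambda>w. ln (r w))"
    and "(\<integral>w. ln (r w) \<partial>M) < 0"
  shows "purely_atomic (distr M borel (Xrv T b r))
       \<or> absolutely_continuous lborel (distr M borel (Xrv T b r))
       \<or> (continuous_measure (distr M borel (Xrv T b r))
          \<and> singular_lebesgue (distr M borel (Xrv T b r)))"
proof -
  interpret P: prob_space M by fact
  have T[measurable]: "T \<in> measurable M M" and D: "distr M M T = M"
    using assms(2) unfolding measure_preserving_map_def by auto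
  have erg: "\<forall>A\<in>sets M. T -` A \<inter> space M = A \<longrightarrow> measure M A = 0 \<or> measure M A = 1"
    using assms(3) unfolding ergodic_def by auto
  define X where "X = Xrv T b r"
  have Xm[measurable]: "X \<in> borel_measurable M"
    unfolding X_def using Xrv_meas[OF T assms(4,5)] .
  define S where "S = (\<lambda>w. (b w, r w)) ` space M"
  have Sc: "countable S" using assms(7) unfolding S_def .
  have Sp: "\<forall>p\<in>S. snd p > 0" using assms(6) unfolding S_def by auto
  define PX where "PX = distr M borel X"
  have emPX: "emeasure PX A = emeasure M (X -` A \<inter> space M)" if "A \<in> sets borel" for A
    unfolding PX_def using emeasure_distr[OF Xm that] .
  have key: "measure M (X -` cl S B \<inter> space M) = 1"
    if B: "B \<in> sets borel" and pos: "emeasure PX B \<noteq> 0" for B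
  proof -
    define E where "E = X -` cl S B \<inter> space M"
    have clB: "cl S B \<in> sets borel" using cl_borel[OF Sc Sp B] .
    have Em: "E \<in> sets M" unfolding E_def using measurable_sets[OF Xm clB] .
    have inv: "T w \<in> E" if "w \<in> E" for w
    proof -
      have w: "w \<in> space M" "X w \<in> cl S B" using that unfolding E_def by auto
      have "(b w, r w) \<in> S" using w(1) unfolding S_def by auto
      then have "\<And>y. y \<in> cl S B \<Longrightarrow> (y - b w) / r w \<in> cl S B"
        using cl_closed[of "(b w, r w)" S] assms(6)[OF w(1)] by simp
      then have "X (T w) \<in> cl S B"
        using Xrv_step[of r w T b "cl S B"] assms(6)[OF w(1)] w(2) unfolding X_def by simp
      moreover have "T w \<in> space M" using measurable_space[OF T w(1)] .
      ultimately show ?thesis unfolding E_def by simp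
    qed
    have "measure M E = 0 \<or> measure M E = 1" using core[OF assms(1) T D erg Em inv] by blast
    moreover have "measure M E \<noteq> 0"
    proof
      assume "measure M E = 0"
      then have "emeasure M E = 0" using P.emeasure_eq_measure by simp
      moreover have "emeasure M (X -` B \<inter> space M) \<le> emeasure M E"
        unfolding E_def using cl_sub[of B S] Em unfolding E_def
        by (intro emeasure_mono) auto
      ultimately show False using pos emPX[OF B] by simp
    qed
    ultimately show ?thesis unfolding E_def by simp
  qed
  have compl: "emeasure PX (UNIV - C) = 0" if C: "C \<in> sets borel" "measure M (X -` C \<inter> space M) = 1" for C
  proof -
    have "UNIV - C \<in> sets borel" using C by auto
    then have "emeasure PX (UNIV - C) = emeasure M (X -` (UNIV - C) \<inter> space M)" using emPX by blast
    also have "X -` (UNIV - C) \<inter> space M = space M - (X -` C \<inter> space M)" by auto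
    also have "emeasure M \<dots> = ennreal (1 - measure M (X -` C \<inter> space M))"
      using P.prob_compl[of "X -` C \<inter> space M"] measurable_sets[OF Xm C(1)]
      by (simp add: P.emeasure_eq_measure)
    finally show ?thesis using C(2) by simp
  qed
  show ?thesis
  proof (cases "\<exists>x0. emeasure PX {x0} \<noteq> 0")
    case True
    then obtain x0 where x0: "emeasure PX {x0} \<noteq> 0" by auto
    have "measure M (X -` cl S {x0} \<inter> space M) = 1" using key[OF _ x0] by simp
    moreover have "cl S {x0} \<in> sets borel" using cl_borel[OF Sc Sp] by simp
    ultimately have "emeasure PX (UNIV - cl S {x0}) = 0" using compl by blast
    then have "purely_atomic PX" unfolding purely_atomic_def using cl_countable[OF Sc Sp, of x0] by blast
    then show ?thesis unfolding PX_def X_def by simp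
  next
    case False
    then have cont: "continuous_measure PX" unfolding continuous_measure_def by auto
    show ?thesis
    proof (cases "absolutely_continuous lborel PX")
      case True then show ?thesis unfolding PX_def X_def by simp
    next
      case False
      then obtain N0 where N0: "N0 \<in> null_sets lborel" "N0 \<notin> null_sets PX"
        unfolding absolutely_continuous_def by auto
      have N0b: "N0 \<in> sets borel" using N0(1) by (simp add: null_sets_def)
      have "emeasure PX N0 \<noteq> 0" using N0 N0b unfolding PX_def by (auto simp: null_sets_def)
      then have "measure M (X -` cl S N0 \<inter> space M) = 1" using key[OF N0b] by simp
      then have "emeasure PX (UNIV - cl S N0) = 0" using compl cl_borel[OF Sc Sp N0b] by blast
      moreover have "cl S N0 \<in> sets borel" "emeasure lborel (cl S N0) = 0"
        using cl_null[OF Sc Sp N0(1)] by (auto simp: null_sets_def)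
      ultimately have "singular_lebesgue PX" unfolding singular_lebesgue_def by blast
      then show ?thesis using cont unfolding PX_def X_def by simp
    qed
  qed
qed

end
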